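(* Let $\alpha\ge p>0$ and let $f$ be a measurable, non-negative, non-decreasing function on $(0,\infty)$. If $p\ge1$, then $$\int_0^\infty\Big(\int_0^x f(y)dy\Big)^p x^{-\alpha}\frac{dx}{x}\ge p\,B(p,\alpha-p+1)\int_0^\infty (xf(x))^p x^{-\alpha}\frac{dx}{x},$$ and if $0<p\le1$ the inequality holds in the reversed direction. In both cases the constant $p\,B(p,\alpha-p+1)$ is sharp (equality holds for $f=A\chi_{(c,\infty)}$, $c>0$, $A>0$).
   Context: $B(u,v)=\int_0^1 t^{u-1}(1-t)^{v-1}dt$ is the Euler beta function. *)

theory Defs
  imports "HOL-Analysis.Analysis"
begin

definition hardy_lhs :: "real \<Rightarrow> real \<Rightarrow> (real \<Rightarrow> real) \<Rightarrow> ennreal" where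
  "hardy_lhs p \<alpha> f =
     (\<integral>\<^sup>+ x \<in> {0<..}. ennreal (((LBINT y:{0<..x}. f y) powr p) * x powr (-\<alpha>) / x) \<partial>lborel)"

definition hardy_rhs :: "real \<Rightarrow> real \<Rightarrow> (real \<Rightarrow> real) \<Rightarrow> ennreal" where
  "hardy_rhs p \<alpha> f =
     (\<integral>\<^sup>+ x \<in> {0<..}. ennreal (((x * f x) powr p) * x powr (-\<alpha>) / x) \<partial>lborel)"

end

theory Submission
  imports Defs
begin

lemma ennreal_cancel:
  assumes "0 < (k::real)" "0 \<le> v" "ennreal v = ennreal k * X"
  shows "X = ennreal (v / k)"
proof -
  have 1: "ennreal (v / k) = ennreal (1 / k) * ennreal v"
    using ennreal_mult[of "1/k" v] assms by simp
  have 2: "ennreal (1 / k) * ennreal k = 1" using assms(1)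
    using ennreal_mult[of "1/k" k] by simp
  have "ennreal (v / k) = (ennreal (1 / k) * ennreal k) * X" unfolding 1 assms(3) by (simp add: mult.assoc)
  then show ?thesis unfolding 2 by simp
qed

lemma gamma_scaled:
  fixes r c :: real assumes r: "0 < r" and c: "0 < c"
  shows "(\<integral>\<^sup>+u. ennreal (indicator {0..} u * u powr (r-1) * exp (-(c*u))) \<partial>lborel) = ennreal (Gamma r / c powr r)"
proof -
  let ?h = "\<lambda>t::real. ennreal (indicator {0..} t * (t powr (r-1) / exp t))"
  let ?I = "\<integral>\<^sup>+u. ennreal (indicator {0..} u * u powr (r-1) * exp (-(c*u))) \<partial>lborel"
  have G: "integral\<^sup>N lborel ?h = ennreal (Gamma r)"
    using nn_integral_has_integral_lebesgue[OF _ Gamma_integral_real[OF r]] by simp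
  have m: "?h \<in> borel_measurable borel" by measurable
  have "integral\<^sup>N lborel ?h = ennreal c * (\<integral>\<^sup>+u. ?h (0 + c*u) \<partial>lborel)"
    using nn_integral_real_affine[OF m, of c 0] c by simp
  also have "(\<lambda>u. ?h (0 + c*u)) = (\<lambda>u. ennreal (c powr (r-1)) * ennreal (indicator {0..} u * u powr (r-1) * exp (-(c*u))))"
  proof
    fix u :: real
    show "?h (0 + c*u) = ennreal (c powr (r-1)) * ennreal (indicator {0..} u * u powr (r-1) * exp (-(c*u)))"
    proof (cases "0 \<le> u")
      case True
      then have "c*u \<ge> 0" using c by simp
      then show ?thesis using True c
        by (simp add: powr_mult exp_minus field_simps ennreal_mult[symmetric])
    next
      case False
      then have "\<not> c*u \<ge> 0" using c by (simp add: mult_le_0_iff zero_le_mult_iff)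
      then show ?thesis using False by simp
    qed
  qed
  also have "(\<integral>\<^sup>+u. ennreal (c powr (r-1)) * ennreal (indicator {0..} u * u powr (r-1) * exp (-(c*u))) \<partial>lborel)
      = ennreal (c powr (r-1)) * ?I"
    by (rule nn_integral_cmult) measurable
  finally have "ennreal (Gamma r) = ennreal (c * c powr (r-1)) * ?I"
    using G c by (simp add: ennreal_mult mult.assoc)
  also have "c * c powr (r-1) = c powr r" using c by (simp add: powr_diff)
  finally have E: "ennreal (Gamma r) = ennreal (c powr r) * ?I" .
  show ?thesis using ennreal_cancel[OF _ _ E] c Gamma_real_pos[OF r] by simp
qed

lemma beta_integral:
  fixes a b :: real assumes a: "0<a" and b: "0<b"
  shows "(\<integral>\<^sup>+s. ennreal (indicator {0..} s * s powr (a-1) * (1+s) powr (-(a+b))) \<partial>lborel) = ennreal (Beta a b)"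
proof -
  let ?K = "\<integral>\<^sup>+s. ennreal (indicator {0..} s * s powr (a-1) * (1+s) powr (-(a+b))) \<partial>lborel"
  define F where "F = (\<lambda>s u::real. ennreal (indicator {0..} s * s powr (a-1) * (indicator {0..} u * u powr (a+b-1) * exp (-((1+s)*u)))))"
  have inner1: "(\<integral>\<^sup>+u. F s u \<partial>lborel) = ennreal (indicator {0..} s * s powr (a-1) * (1+s) powr (-(a+b))) * ennreal (Gamma (a+b))" for s
  proof (cases "0 \<le> s")
    case True
    have "(\<integral>\<^sup>+u. F s u \<partial>lborel) = (\<integral>\<^sup>+u. ennreal (s powr (a-1)) * ennreal (indicator {0..} u * u powr (a+b-1) * exp (-((1+s)*u))) \<partial>lborel)"
      using True by (intro nn_integral_cong) (simp add: F_def ennreal_mult[symmetric])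
    also have "\<dots> = ennreal (s powr (a-1)) * (\<integral>\<^sup>+u. ennreal (indicator {0..} u * u powr (a+b-1) * exp (-((1+s)*u))) \<partial>lborel)"
      by (rule nn_integral_cmult) measurable
    also have "(\<integral>\<^sup>+u. ennreal (indicator {0..} u * u powr (a+b-1) * exp (-((1+s)*u))) \<partial>lborel) = ennreal (Gamma (a+b) / (1+s) powr (a+b))"
      using gamma_scaled[of "a+b" "1+s"] a b True by simp
    finally have "(\<integral>\<^sup>+u. F s u \<partial>lborel) = ennreal (s powr (a-1) * (Gamma (a+b) / (1+s) powr (a+b)))"
      using True Gamma_real_pos[of "a+b"] a b by (simp add: ennreal_mult[symmetric])
    also have "s powr (a-1) * (Gamma (a+b) / (1+s) powr (a+b)) = s powr (a-1) * (1+s) powr (-(a+b)) * Gamma (a+b)"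
      by (simp only: powr_minus divide_inverse) (simp add: ac_simps)
    finally show ?thesis using True Gamma_real_pos[of "a+b"] a b
      by (simp add: ennreal_mult[symmetric])
  next
    case False
    then show ?thesis by (simp add: F_def)
  qed
  have "?K * ennreal (Gamma (a+b)) = (\<integral>\<^sup>+s. \<integral>\<^sup>+u. F s u \<partial>lborel \<partial>lborel)"
    unfolding inner1 by (rule nn_integral_multc[symmetric]) measurable
  also have "\<dots> = (\<integral>\<^sup>+u. \<integral>\<^sup>+s. F s u \<partial>lborel \<partial>lborel)"
    by (rule lborel_pair.Fubini'[symmetric]) (unfold F_def, measurable)
  also have "(\<lambda>u. \<integral>\<^sup>+s. F s u \<partial>lborel) = (\<lambda>u. ennreal (indicator {0..} u * u powr (b-1) * exp (-(1*u))) * ennreal (Gamma a))"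
  proof
    fix u :: real
    show "(\<integral>\<^sup>+s. F s u \<partial>lborel) = ennreal (indicator {0..} u * u powr (b-1) * exp (-(1*u))) * ennreal (Gamma a)"
    proof (cases "0 < u")
      case True
      have "(\<integral>\<^sup>+s. F s u \<partial>lborel) = (\<integral>\<^sup>+s. ennreal (u powr (a+b-1) * exp (-u)) * ennreal (indicator {0..} s * s powr (a-1) * exp (-(u * s))) \<partial>lborel)"
        using True by (intro nn_integral_cong) (simp add: F_def ennreal_mult[symmetric] algebra_simps exp_add[symmetric])
      also have "\<dots> = ennreal (u powr (a+b-1) * exp (-u)) * (\<integral>\<^sup>+s. ennreal (indicator {0..} s * s powr (a-1) * exp (-(u * s))) \<partial>lborel)"
        by (rule nn_integral_cmult) measurable
      also have "(\<integral>\<^sup>+s. ennreal (indicator {0..} s * s powr (a-1) * exp (-(u * s))) \<partial>lborel) = ennreal (Gamma a / u powr a)"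
        using gamma_scaled[of a u] a True by simp
      also have "ennreal (u powr (a+b-1) * exp (-u)) * ennreal (Gamma a / u powr a) = ennreal (u powr (b-1) * exp (-u) * Gamma a)"
      proof -
        have "u powr (a+b-1) / u powr a = u powr (b-1)" using True by (simp add: powr_diff[symmetric])
        then have "u powr (a+b-1) * exp (-u) * (Gamma a / u powr a) = u powr (b-1) * exp (-u) * Gamma a"
          by (metis (no_types, lifting) mult.commute times_divide_eq_right)
        then show ?thesis using True Gamma_real_pos[OF a] by (simp add: ennreal_mult[symmetric])
      qed
      finally show ?thesis using True Gamma_real_pos[OF a] by (simp add: ennreal_mult[symmetric])
    next
      case False
      then have z1: "indicator {0..} u * u powr (a+b-1) = (0::real)" and z2: "indicator {0..} u * u powr (b-1) = (0::real)"
        by (cases "u = 0"; auto)+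
      show ?thesis by (simp only: F_def z1 z2) simp
    qed
  qed
  also have "(\<integral>\<^sup>+u. ennreal (indicator {0..} u * u powr (b-1) * exp (-(1*u))) * ennreal (Gamma a) \<partial>lborel)
      = (\<integral>\<^sup>+u. ennreal (indicator {0..} u * u powr (b-1) * exp (-(1*u))) \<partial>lborel) * ennreal (Gamma a)"
    by (rule nn_integral_multc) measurable
  also have "(\<integral>\<^sup>+u. ennreal (indicator {0..} u * u powr (b-1) * exp (-(1*u))) \<partial>lborel) = ennreal (Gamma b)"
    using gamma_scaled[of b 1] b by simp
  finally have E: "ennreal (Gamma a * Gamma b) = ennreal (Gamma (a+b)) * ?K"
    using Gamma_real_pos[OF a] Gamma_real_pos[OF b] by (simp add: ennreal_mult[symmetric] mult.commute)
  show ?thesis using ennreal_cancel[OF _ _ E] Gamma_real_pos[OF a] Gamma_real_pos[OF b] Gamma_real_pos[of "a+b"] a b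
    by (simp add: Beta_def)
qed

lemma Beta_real_pos: "0 < (a::real) \<Longrightarrow> 0 < b \<Longrightarrow> 0 < Beta a b"
  by (simp add: Beta_def Gamma_real_pos)

lemma powr_div_self: "0 < (x::real) \<Longrightarrow> x powr (-a) / x = x powr (-a-1)"
  by (simp add: powr_diff)

lemma l2: assumes "0 < (y::real)" "0 \<le> s" shows "(y * s) powr (p-1) * (y * (1+s)) powr (-a-1) = y powr (p-a-2) * (s powr (p-1) * (1+s) powr (-(a+1)))"
proof -
  have 1: "(y * s) powr (p-1) = y powr (p-1) * s powr (p-1)" using assms by (simp add: powr_mult)
  have 2: "(y * (1+s)) powr (-a-1) = y powr (-a-1) * (1+s) powr (-a-1)" using assms by (simp add: powr_mult)
  have 3: "y powr (p-1) * y powr (-a-1) = y powr ((p-1)+(-a-1))" by (rule powr_add[symmetric])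
  have 4: "(p-1)+(-a-1) = p-a-2" "-a-1 = -(a+1)" by simp_all
  show ?thesis unfolding 1 2 using 3 unfolding 4 by (simp add: ac_simps)
qed

lemma kernel_integral:
  fixes p \<alpha> y :: real assumes p: "0<p" and pa: "p \<le> \<alpha>" and y: "0<y"
  shows "(\<integral>\<^sup>+x. ennreal (indicator {y..} x * (x-y) powr (p-1) * (x powr (-\<alpha>) / x)) \<partial>lborel) = ennreal (y powr (p-\<alpha>-1) * Beta p (\<alpha>-p+1))"
proof -
  define h where "h = (\<lambda>x. ennreal (indicator {y..} x * (x-y) powr (p-1) * (x powr (-\<alpha>) / x)))"
  have m: "h \<in> borel_measurable borel" unfolding h_def by measurable
  have "integral\<^sup>N lborel h = ennreal y * (\<integral>\<^sup>+s. h (y + y * s) \<partial>lborel)"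
    using nn_integral_real_affine[OF m, where c=y and t=y] y by simp
  also have "(\<lambda>s. h (y + y * s)) = (\<lambda>s. ennreal (y powr (p-\<alpha>-2)) * ennreal (indicator {0..} s * s powr (p-1) * (1+s) powr (-(\<alpha>+1))))"
  proof
    fix s :: real
    show "h (y + y * s) = ennreal (y powr (p-\<alpha>-2)) * ennreal (indicator {0..} s * s powr (p-1) * (1+s) powr (-(\<alpha>+1)))"
    proof (cases "0 \<le> s")
      case True
      have e1: "y + y * s - y = y * s" by simp
      have e2: "y + y * s = y * (1+s)" by (simp add: algebra_simps)
      have pos: "0 < y * (1+s)" using y True by simp
      have "h (y + y * s) = ennreal ((y * s) powr (p-1) * ((y * (1+s)) powr (-\<alpha>) / (y * (1+s))))"
        unfolding h_def using y True by (simp add: e1 e2[symmetric])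
      also have "(y * (1+s)) powr (-\<alpha>) / (y * (1+s)) = (y * (1+s)) powr (-\<alpha>-1)"
        using powr_div_self[OF pos] .
      also have "(y * s) powr (p-1) * (y * (1+s)) powr (-\<alpha>-1) = y powr (p-\<alpha>-2) * (s powr (p-1) * (1+s) powr (-(\<alpha>+1)))"
        using l2[OF y True] .
      finally show ?thesis using True by (simp add: ennreal_mult[symmetric] mult.assoc)
    next
      case False
      then have "y + y * s < y" using y by (simp add: mult_pos_neg)
      then show ?thesis using False by (simp add: h_def)
    qed
  qed
  also have "(\<integral>\<^sup>+s. ennreal (y powr (p-\<alpha>-2)) * ennreal (indicator {0..} s * s powr (p-1) * (1+s) powr (-(\<alpha>+1))) \<partial>lborel)
     = ennreal (y powr (p-\<alpha>-2)) * (\<integral>\<^sup>+s. ennreal (indicator {0..} s * s powr (p-1) * (1+s) powr (-(\<alpha>+1))) \<partial>lborel)"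
    by (rule nn_integral_cmult) measurable
  also have "(\<integral>\<^sup>+s. ennreal (indicator {0..} s * s powr (p-1) * (1+s) powr (-(\<alpha>+1))) \<partial>lborel) = ennreal (Beta p (\<alpha>-p+1))"
    using beta_integral[of p "\<alpha>-p+1"] p pa by simp
  also have "ennreal y * (ennreal (y powr (p-\<alpha>-2)) * ennreal (Beta p (\<alpha>-p+1))) = ennreal (y * y powr (p-\<alpha>-2) * Beta p (\<alpha>-p+1))"
    using y Beta_real_pos[of p "\<alpha>-p+1"] p pa by (simp add: ennreal_mult[symmetric] mult.assoc)
  also have "y * y powr (p-\<alpha>-2) = y powr (p-\<alpha>-1)"
  proof -
    have "y * y powr (p-\<alpha>-2) = y powr 1 * y powr (p-\<alpha>-2)" using y by simp
    also have "\<dots> = y powr (1 + (p-\<alpha>-2))" by (rule powr_add[symmetric])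
    finally show ?thesis by simp
  qed
  finally show ?thesis unfolding h_def .
qed

definition Psi :: "real \<Rightarrow> (real \<Rightarrow> real) \<Rightarrow> real \<Rightarrow> ennreal" where
  "Psi p g x = (\<integral>\<^sup>+y. ennreal (if 0 < y \<and> y \<le> x then p * (x-y) powr (p-1) * g y powr p else 0) \<partial>lborel)"

lemma powr_rhs_eq:
  assumes "0 < (y::real)" "0 \<le> c"
  shows "p * c powr p * (y powr (p-\<alpha>-1) * B) = p * B * ((y * c) powr p * y powr (-\<alpha>) / y)"
proof -
  have 1: "(y * c) powr p = y powr p * c powr p" using assms by (simp add: powr_mult)
  have 2: "y powr p * y powr (-\<alpha>) = y powr (p + -\<alpha>)" by (rule powr_add[symmetric])
  have 3: "y powr (p + -\<alpha>) / y = y powr (p-\<alpha>-1)" using assms by (simp add: powr_diff)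
  have "(y * c) powr p * y powr (-\<alpha>) / y = c powr p * (y powr p * y powr (-\<alpha>) / y)" unfolding 1 by simp
  also have "\<dots> = c powr p * y powr (p-\<alpha>-1)" unfolding 2 3 ..
  finally show ?thesis by simp
qed

lemma tonelli_step:
  fixes p \<alpha> :: real and g :: "real \<Rightarrow> real"
  assumes p: "0<p" and pa: "p \<le> \<alpha>" and gm: "g \<in> borel_measurable borel" and g0: "\<And>y. 0 \<le> g y"
  shows "(\<integral>\<^sup>+x\<in>{0<..}. Psi p g x * ennreal (x powr (-\<alpha>) / x) \<partial>lborel) = ennreal (p * Beta p (\<alpha>-p+1)) * hardy_rhs p \<alpha> g"
proof -
  note [measurable] = gm
  define H where "H = (\<lambda>x y. ennreal ((if 0 < y \<and> y \<le> x then p * (x-y) powr (p-1) * g y powr p else 0) * (x powr (-\<alpha>) / x)))"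
  have Hm: "(\<lambda>(x, y). H x y) \<in> borel_measurable (lborel \<Otimes>\<^sub>M lborel)" unfolding H_def by measurable
  have step1: "Psi p g x * ennreal (x powr (-\<alpha>) / x) * indicator {0<..} x = (\<integral>\<^sup>+y. H x y \<partial>lborel)" for x
  proof (cases "0 < x")
    case True
    have "Psi p g x * ennreal (x powr (-\<alpha>) / x) = (\<integral>\<^sup>+y. ennreal (if 0 < y \<and> y \<le> x then p * (x-y) powr (p-1) * g y powr p else 0) * ennreal (x powr (-\<alpha>) / x) \<partial>lborel)"
      unfolding Psi_def by (rule nn_integral_multc[symmetric]) measurable
    also have "\<dots> = (\<integral>\<^sup>+y. H x y \<partial>lborel)"
      unfolding H_def using True p g0 by (intro nn_integral_cong) (auto simp: ennreal_mult[symmetric])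
    finally show ?thesis using True by simp
  next
    case False
    then have "H x y = 0" for y unfolding H_def by auto
    then show ?thesis using False by simp
  qed
  have step2: "(\<integral>\<^sup>+x. H x y \<partial>lborel) = ennreal (p * Beta p (\<alpha>-p+1)) * (ennreal ((y * g y) powr p * y powr (-\<alpha>) / y) * indicator {0<..} y)" for y
  proof (cases "0 < y")
    case True
    have "(\<integral>\<^sup>+x. H x y \<partial>lborel) = (\<integral>\<^sup>+x. ennreal (p * g y powr p) * ennreal (indicator {y..} x * (x-y) powr (p-1) * (x powr (-\<alpha>) / x)) \<partial>lborel)"
      unfolding H_def using True p g0 by (intro nn_integral_cong) (auto simp: ennreal_mult[symmetric] indicator_def)
    also have "\<dots> = ennreal (p * g y powr p) * (\<integral>\<^sup>+x. ennreal (indicator {y..} x * (x-y) powr (p-1) * (x powr (-\<alpha>) / x)) \<partial>lborel)"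
      by (rule nn_integral_cmult) measurable
    also have "\<dots> = ennreal (p * g y powr p) * ennreal (y powr (p-\<alpha>-1) * Beta p (\<alpha>-p+1))"
      using kernel_integral[OF p pa True] by simp
    also have "\<dots> = ennreal (p * g y powr p * (y powr (p-\<alpha>-1) * Beta p (\<alpha>-p+1)))"
      using p True Beta_real_pos[of p "\<alpha>-p+1"] pa by (simp add: ennreal_mult[symmetric])
    also have "p * g y powr p * (y powr (p-\<alpha>-1) * Beta p (\<alpha>-p+1)) = p * Beta p (\<alpha>-p+1) * ((y * g y) powr p * y powr (-\<alpha>) / y)"
      using powr_rhs_eq[OF True g0[of y]] .
    finally show ?thesis using True p Beta_real_pos[of p "\<alpha>-p+1"] pa g0[of y]
      by (simp add: ennreal_mult[symmetric])
  next
    case False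
    then have "H x y = 0" for x unfolding H_def by auto
    then show ?thesis using False by simp
  qed
  have "(\<integral>\<^sup>+x\<in>{0<..}. Psi p g x * ennreal (x powr (-\<alpha>) / x) \<partial>lborel) = (\<integral>\<^sup>+x. \<integral>\<^sup>+y. H x y \<partial>lborel \<partial>lborel)"
    using step1 by simp
  also have "\<dots> = (\<integral>\<^sup>+y. \<integral>\<^sup>+x. H x y \<partial>lborel \<partial>lborel)"
    by (rule lborel_pair.Fubini'[OF Hm, symmetric])
  also have "\<dots> = (\<integral>\<^sup>+y. ennreal (p * Beta p (\<alpha>-p+1)) * (ennreal ((y * g y) powr p * y powr (-\<alpha>) / y) * indicator {0<..} y) \<partial>lborel)"
    using step2 by simp
  also have "\<dots> = ennreal (p * Beta p (\<alpha>-p+1)) * hardy_rhs p \<alpha> g"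
    unfolding hardy_rhs_def by (rule nn_integral_cmult) measurable
  finally show ?thesis .
qed

lemma mg_nonneg: fixes g :: "real \<Rightarrow> real" assumes gm: "mono g" and g0: "\<And>y. y \<le> 0 \<Longrightarrow> g y = (0::real)" shows "0 \<le> g y"
proof (cases "y \<le> 0")
  case True then show ?thesis using g0 by simp
next
  case False then have "g 0 \<le> g y" using gm by (simp add: monoD)
  then show ?thesis using g0[of 0] by simp
qed

lemma mg_meas: assumes gm: "mono (g :: real \<Rightarrow> real)" shows "g \<in> borel_measurable lborel"
  using borel_measurable_mono[OF gm] by simp

lemma Ioc_fin: "emeasure lborel {a<..b::real} < \<infinity>"
proof (cases "a \<le> b")
  case True then show ?thesis by (simp add: emeasure_lborel_Ioc)
next
  case False then have "{a<..b} = {}" by auto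
  then show ?thesis by simp
qed

lemma const_int: "set_integrable lborel {a<..b::real} (\<lambda>_. c::real)"
  unfolding set_integrable_def
  by (rule integrableI_bounded_set_indicator[where B="\<bar>c\<bar>"]) (use Ioc_fin[of a b] in auto)

lemma mg_int: fixes g :: "real \<Rightarrow> real" assumes gm: "mono g" and g0: "\<And>y. y \<le> 0 \<Longrightarrow> g y = (0::real)"
  shows "set_integrable lborel {a<..b} g"
  unfolding set_integrable_def
proof (rule integrableI_bounded_set_indicator[where B="g b"])
  show "g \<in> borel_measurable lborel" using mg_meas[OF gm] .
  show "emeasure lborel {a<..b} < \<infinity>" by (rule Ioc_fin)
  show "AE x\<in>{a<..b} in lborel. norm (g x) \<le> g b"
    using mg_nonneg[OF gm g0] gm by (intro AE_I2) (auto simp: monoD)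
qed simp

lemma mg_split: fixes g :: "real \<Rightarrow> real" assumes gm: "mono g" and g0: "\<And>y. y \<le> 0 \<Longrightarrow> g y = (0::real)"
  and "a \<le> b" "b \<le> c"
  shows "(LBINT y:{a<..c}. g y) = (LBINT y:{a<..b}. g y) + (LBINT y:{b<..c}. g y)"
proof -
  have "{a<..c} = {a<..b} \<union> {b<..c}" using assms(3,4) by (auto simp: not_less)
  then show ?thesis using set_integral_Un[of "{a<..b}" "{b<..c}" lborel g] mg_int[OF gm g0] by simp
qed

lemma mg_bounds: fixes g :: "real \<Rightarrow> real" assumes gm: "mono g" and g0: "\<And>y. y \<le> 0 \<Longrightarrow> g y = (0::real)"
  and ab: "a \<le> b"
  shows "(b - a) * g a \<le> (LBINT y:{a<..b}. g y)" "(LBINT y:{a<..b}. g y) \<le> (b - a) * g b"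
proof -
  have c: "(LBINT y:{a<..b}. c) = (b - a) * c" for c :: real
    using set_integral_const[of "{a<..b}" lborel c] ab Ioc_fin[of a b] by (simp add: measure_lborel_Ioc)
  have "(LBINT y:{a<..b}. g a) \<le> (LBINT y:{a<..b}. g y)"
    by (rule set_integral_mono[OF const_int mg_int[OF gm g0]]) (auto simp: monoD[OF gm])
  then show "(b - a) * g a \<le> (LBINT y:{a<..b}. g y)" using c by simp
  have "(LBINT y:{a<..b}. g y) \<le> (LBINT y:{a<..b}. g b)"
    by (rule set_integral_mono[OF mg_int[OF gm g0] const_int]) (auto simp: monoD[OF gm])
  then show "(LBINT y:{a<..b}. g y) \<le> (b - a) * g b" using c by simp
qed

lemma mg_F_zero: fixes g :: "real \<Rightarrow> real" shows "y \<le> 0 \<Longrightarrow> (LBINT t:{0<..y}. g t) = (0::real)"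
proof -
  assume "y \<le> 0" then have "{0<..y} = {}" by auto
  then show ?thesis by (simp add: set_lebesgue_integral_def)
qed

lemma mg_int_nonneg: fixes g :: "real \<Rightarrow> real" assumes gm: "mono g" and g0: "\<And>y. y \<le> 0 \<Longrightarrow> g y = (0::real)"
  shows "0 \<le> (LBINT t:{a<..b}. g t)"
proof (cases "a \<le> b")
  case True
  have "0 \<le> (b - a) * g a" using True mg_nonneg[OF gm g0, of a] by simp
  also have "\<dots> \<le> (LBINT t:{a<..b}. g t)" by (rule mg_bounds(1)[OF gm g0 True])
  finally show ?thesis .
next
  case False then have "{a<..b} = {}" by auto
  then show ?thesis by (simp add: set_lebesgue_integral_def)
qed

lemma mg_F_mono: fixes g :: "real \<Rightarrow> real" assumes gm: "mono g" and g0: "\<And>y. y \<le> 0 \<Longrightarrow> g y = (0::real)"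
  shows "mono (\<lambda>y. LBINT t:{0<..y}. g t)"
proof (rule monoI)
  fix y z :: real assume yz: "y \<le> z"
  show "(LBINT t:{0<..y}. g t) \<le> (LBINT t:{0<..z}. g t)"
  proof (cases "y \<le> 0")
    case True
    have "0 \<le> (LBINT t:{0<..z}. g t)"
      using mg_int_nonneg[OF gm g0] by simp
    then show ?thesis using True mg_F_zero[of y g] by simp
  next
    case False
    then have "(LBINT t:{0<..z}. g t) = (LBINT t:{0<..y}. g t) + (LBINT t:{y<..z}. g t)"
      using mg_split[OF gm g0, of 0 y z] yz by simp
    moreover have "0 \<le> (LBINT t:{y<..z}. g t)"
      using mg_int_nonneg[OF gm g0] by simp
    ultimately show ?thesis by simp
  qed
qed

lemma mg_F_cont: fixes g :: "real \<Rightarrow> real" assumes gm: "mono g" and g0: "\<And>y. y \<le> 0 \<Longrightarrow> g y = (0::real)"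
  shows "continuous_on {0..x} (\<lambda>y. LBINT t:{0<..y}. g t)"
proof (rule lipschitz_on_continuous_on)
  let ?F = "\<lambda>y. LBINT t:{0<..y}. g t"
  have *: "dist (?F a) (?F b) \<le> g x * dist a b" if "a \<in> {0..x}" "b \<in> {0..x}" "a \<le> b" for a b
  proof -
    have "?F b = ?F a + (LBINT t:{a<..b}. g t)" using mg_split[OF gm g0, of 0 a b] that by simp
    moreover have "0 \<le> (LBINT t:{a<..b}. g t)" using mg_int_nonneg[OF gm g0] by simp
    moreover have "(LBINT t:{a<..b}. g t) \<le> (b - a) * g b" using mg_bounds(2)[OF gm g0 that(3)] .
    moreover have "(b - a) * g b \<le> g x * (b - a)" using that monoD[OF gm, of b x]
      by (simp add: mult.commute mult_right_mono)
    moreover have "dist a b = b - a" using that by (simp add: dist_real_def)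
    ultimately have "dist (?F a) (?F b) = (LBINT t:{a<..b}. g t)" "(LBINT t:{a<..b}. g t) \<le> g x * dist a b"
      by (simp_all add: dist_real_def)
    then show ?thesis by simp
  qed
  show "(g x)-lipschitz_on {0..x} ?F"
    unfolding lipschitz_on_def
  proof (intro conjI ballI)
    show "0 \<le> g x" using mg_nonneg[OF gm g0] .
    fix a b assume "a \<in> {0..x}" "b \<in> {0..x}"
    then show "dist (?F a) (?F b) \<le> g x * dist a b"
      using *[of a b] *[of b a] by (cases "a \<le> b") (auto simp: dist_commute)
  qed
qed

lemma mg_nn_eq: fixes g :: "real \<Rightarrow> real" assumes gm: "mono g" and g0: "\<And>y. y \<le> 0 \<Longrightarrow> g y = (0::real)"
  shows "(\<integral>\<^sup>+y. ennreal (indicator {a<..b} y * g y) \<partial>lborel) = ennreal (LBINT t:{a<..b}. g t)"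
proof -
  have i: "integrable lborel (\<lambda>y. indicator {a<..b} y * g y)"
    using mg_int[OF gm g0, of a b] by (simp add: set_integrable_def)
  show ?thesis
    using nn_integral_eq_integral[OF i] mg_nonneg[OF gm g0] by (simp add: set_lebesgue_integral_def)
qed

lemma pushforward:
  fixes g :: "real \<Rightarrow> real" and h :: "real \<Rightarrow> ennreal"
  assumes gm: "mono g" and g0: "\<And>y. y \<le> 0 \<Longrightarrow> g y = 0" and x: "0 < x" and hm: "h \<in> borel_measurable borel"
  shows "(\<integral>\<^sup>+y. ennreal (indicator {0<..x} y * g y) * h (LBINT t:{0<..y}. g t) \<partial>lborel)
       = (\<integral>\<^sup>+t. indicator {0..(LBINT t:{0<..x}. g t)} t * h t \<partial>lborel)"
proof -
  define F where "F = (\<lambda>y. LBINT t:{0<..y}. g t)"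
  define T where "T = F x"
  define N where "N = density lborel (\<lambda>y. ennreal (indicator {0<..x} y * g y))"
  define L where "L = density lborel (indicator {0..T} :: real \<Rightarrow> ennreal)"
  have Fmono: "mono F" unfolding F_def using mg_F_mono[OF gm g0] .
  have Fm: "F \<in> borel_measurable borel" using Fmono by (rule borel_measurable_mono)
  have FmN: "F \<in> N \<rightarrow>\<^sub>M borel" using Fm unfolding N_def by simp
  have gmb[measurable]: "g \<in> borel_measurable borel" using gm by (rule borel_measurable_mono)
  have Fpre: "F -` {s<..} \<in> sets borel" for s using measurable_sets_borel[OF Fm, of "{s<..}"] by simp
  have F0: "0 \<le> F y" for y
  proof (cases "y \<le> 0")
    case True then show ?thesis unfolding F_def using mg_F_zero[of y g] by simp
  next
    case False then show ?thesis unfolding F_def using mg_int_nonneg[OF gm g0, of 0 y] by simp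
  qed
  have FT: "F y \<le> T" if "y \<le> x" for y using that Fmono unfolding T_def by (simp add: monoD)
  have Fz: "F 0 = 0" unfolding F_def using mg_F_zero[of 0 g] by simp
  have Fcont: "continuous_on {0..x} F" unfolding F_def using mg_F_cont[OF gm g0] .
  have T0: "0 \<le> T" using F0 unfolding T_def .
  have Fsplit: "F b = F a + (LBINT t:{a<..b}. g t)" if "0 \<le> a" "a \<le> b" for a b
    unfolding F_def using mg_split[OF gm g0, of 0 a b] that by simp
  define V where "V = (\<lambda>s. if s < 0 then T else if s < T then T - s else 0)"
  have lhs: "emeasure (distr N borel F) {s<..} = ennreal (V s)" for s
  proof -
    have "emeasure (distr N borel F) {s<..} = emeasure N (F -` {s<..})"
      by (subst emeasure_distr[OF FmN]) (auto simp: N_def)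
    also have "\<dots> = (\<integral>\<^sup>+y. ennreal (indicator {0<..x} y * g y) * indicator (F -` {s<..}) y \<partial>lborel)"
      unfolding N_def using Fm Fpre[of s] by (subst emeasure_density) (auto simp: nn_integral_set_ennreal)
    also have "\<dots> = ennreal (V s)"
    proof (cases "s < 0")
      case True
      have "(\<lambda>y. ennreal (indicator {0<..x} y * g y) * indicator (F -` {s<..}) y) = (\<lambda>y. ennreal (indicator {0<..x} y * g y))"
      proof -
        have "s < F y" for y using True F0[of y] by linarith
        then show ?thesis by (intro ext) (auto simp: indicator_def)
      qed
      then show ?thesis using True mg_nn_eq[OF gm g0, of 0 x] by (simp add: V_def T_def F_def)
    next
      case False
      note s0 = this
      show ?thesis
      proof (cases "s < T")
        case False
        have "(\<lambda>y. ennreal (indicator {0<..x} y * g y) * indicator (F -` {s<..}) y) = (\<lambda>y. 0)"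
        proof
          fix y show "ennreal (indicator {0<..x} y * g y) * indicator (F -` {s<..}) y = 0"
            using FT[of y] False by (cases "y \<in> {0<..x}") (auto simp: indicator_def)
        qed
        then show ?thesis using False s0 by (simp add: V_def)
      next
        case True
        define S where "S = {0..x} \<inter> F -` {..s}"
        have Scl: "closed S" unfolding S_def by (intro continuous_closed_preimage Fcont) auto
        have S0: "0 \<in> S" unfolding S_def using s0 Fz x by auto
        have Sb: "bdd_above S" unfolding S_def by (rule bdd_aboveI[where M=x]) auto
        define z where "z = Sup S"
        have zS: "z \<in> S" unfolding z_def using closed_contains_Sup[OF _ Sb Scl] S0 by auto
        obtain z' where z': "0 \<le> z'" "z' \<le> x" "F z' = s"
          using IVT'[of F 0 s x] Fz s0 True Fcont x unfolding T_def by auto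
        have "z' \<le> z" unfolding z_def using z' by (intro cSup_upper Sb) (auto simp: S_def)
        then have "s \<le> F z" using z' Fmono by (auto dest: monoD)
        moreover have "F z \<le> s" "0 \<le> z" "z \<le> x" using zS unfolding S_def by auto
        ultimately have Fzs: "F z = s" and z0: "0 \<le> z" and zx: "z \<le> x" by auto
        have iff: "s < F y \<longleftrightarrow> z < y" if "y \<in> {0<..x}" for y
        proof
          assume "s < F y"
          show "z < y"
          proof (rule ccontr)
            assume "\<not> z < y" then have "F y \<le> F z" using Fmono by (auto simp: not_less dest: monoD)
            then show False using Fzs \<open>s < F y\<close> by simp
          qed
        next
          assume "z < y"
          show "s < F y"
          proof (rule ccontr)
            assume "\<not> s < F y" then have "y \<in> S" using that unfolding S_def by auto
            then have "y \<le> z" unfolding z_def using Sb by (rule cSup_upper)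
            then show False using \<open>z < y\<close> by simp
          qed
        qed
        have "(\<lambda>y. ennreal (indicator {0<..x} y * g y) * indicator (F -` {s<..}) y) = (\<lambda>y. ennreal (indicator {z<..x} y * g y))"
        proof
          fix y show "ennreal (indicator {0<..x} y * g y) * indicator (F -` {s<..}) y = ennreal (indicator {z<..x} y * g y)"
          proof (cases "y \<in> {0<..x}")
            case True then show ?thesis using iff[OF True] by (auto simp: indicator_def)
          next
            case False then show ?thesis using z0 by (auto simp: indicator_def)
          qed
        qed
        moreover have "T = s + (LBINT t:{z<..x}. g t)" using Fsplit[OF z0 zx] Fzs unfolding T_def by simp
        ultimately show ?thesis using mg_nn_eq[OF gm g0, of z x] True s0 by (simp add: V_def)
      qed
    qed
    finally show ?thesis .
  qed
  have rhs: "emeasure L {s<..} = ennreal (V s)" for s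
  proof -
    have "emeasure L {s<..} = emeasure lborel ({0..T} \<inter> {s<..})"
      unfolding L_def by (subst emeasure_density) (auto simp: nn_integral_indicator[symmetric] indicator_inter_arith intro!: nn_integral_cong)
    also have "\<dots> = ennreal (V s)"
    proof (cases "s < 0")
      case True then have "{0..T} \<inter> {s<..} = {0..T}" by auto
      then show ?thesis using True T0 by (simp add: V_def)
    next
      case False
      show ?thesis
      proof (cases "s < T")
        case True then have "{0..T} \<inter> {s<..} = {s<..T}" using False by auto
        then show ?thesis using True False by (simp add: V_def emeasure_lborel_Ioc)
      next
        case c: False then have "{0..T} \<inter> {s<..} = {}" by auto
        then show ?thesis using c False by (simp add: V_def)
      qed
    qed
    finally show ?thesis .
  qed
  have D: "distr N borel F = L"
  proof (rule measure_eqI_lessThan)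
    show "sets (distr N borel F) = sets borel" by simp
    show "sets L = sets borel" by (simp add: L_def)
    fix s
    show "emeasure (distr N borel F) {s<..} < \<infinity>" using lhs[of s] by simp
    show "emeasure (distr N borel F) {s<..} = emeasure L {s<..}" using lhs[of s] rhs[of s] by simp
  qed
  have "(\<integral>\<^sup>+t. h t \<partial>distr N borel F) = (\<integral>\<^sup>+y. h (F y) \<partial>N)"
    by (rule nn_integral_distr[OF FmN]) (use hm in simp)
  also have "\<dots> = (\<integral>\<^sup>+y. ennreal (indicator {0<..x} y * g y) * h (F y) \<partial>lborel)"
    unfolding N_def using Fm hm by (subst nn_integral_density) auto
  finally have 1: "(\<integral>\<^sup>+t. h t \<partial>L) = (\<integral>\<^sup>+y. ennreal (indicator {0<..x} y * g y) * h (F y) \<partial>lborel)"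
    unfolding D .
  have 2: "(\<integral>\<^sup>+t. h t \<partial>L) = (\<integral>\<^sup>+t. indicator {0..T} t * h t \<partial>lborel)"
    unfolding L_def using hm by (subst nn_integral_density) auto
  show ?thesis using 1 2 unfolding F_def T_def by simp
qed

lemma power_integral:
  fixes p T :: real assumes p: "0 < p" and T: "0 \<le> T"
  shows "(\<integral>\<^sup>+t. indicator {0..T} t * ennreal (p * (T - t) powr (p-1)) \<partial>lborel) = ennreal (T powr p)"
proof -
  define f where "f = (\<lambda>t. indicator {0..T} t * ennreal (p * (T - t) powr (p-1)))"
  have m: "f \<in> borel_measurable borel" unfolding f_def by measurable
  have "integral\<^sup>N lborel f = ennreal \<bar>-1\<bar> * (\<integral>\<^sup>+u. f (T + (-1) * u) \<partial>lborel)"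
    by (rule nn_integral_real_affine[OF m]) simp
  also have "(\<lambda>u. f (T + (-1) * u)) = (\<lambda>u. ennreal (indicator {0..T} u * (p * u powr (p-1))))"
    by (intro ext) (auto simp: f_def indicator_def)
  also have "(\<integral>\<^sup>+u. ennreal (indicator {0..T} u * (p * u powr (p-1))) \<partial>lborel) = ennreal (p * (T powr (p - 1 + 1) / (p - 1 + 1)))"
  proof (rule nn_integral_has_integral_lebesgue)
    have "((\<lambda>u. u powr (p-1)) has_integral (T powr (p-1+1) / (p-1+1))) {0..T}"
      by (rule has_integral_powr_from_0) (use p T in auto)
    then show "((\<lambda>u. p * u powr (p-1)) has_integral (p * (T powr (p-1+1) / (p-1+1)))) {0..T}"
      by (rule has_integral_mult_right)
  qed (use p in auto)
  finally show ?thesis using p unfolding f_def by simp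
qed

lemma alg_cmp:
  fixes p d c G :: real
  assumes p: "0 < p" and d: "0 \<le> d" and c: "0 \<le> c" and dcG: "d * c \<le> G" and d0: "d = 0 \<Longrightarrow> G = 0"
  shows "1 \<le> p \<Longrightarrow> p * d powr (p-1) * c powr p \<le> c * (p * G powr (p-1))"
    and "p \<le> 1 \<Longrightarrow> c * (p * G powr (p-1)) \<le> p * d powr (p-1) * c powr p"
    and "(0 < c \<Longrightarrow> d * c = G) \<Longrightarrow> p * d powr (p-1) * c powr p = c * (p * G powr (p-1))"
proof -
  consider "c = 0" | "c > 0" "d = 0" | "c > 0" "d > 0" using c d by linarith
  then have "(1 \<le> p \<longrightarrow> p * d powr (p-1) * c powr p \<le> c * (p * G powr (p-1))) \<and>
    (p \<le> 1 \<longrightarrow> c * (p * G powr (p-1)) \<le> p * d powr (p-1) * c powr p) \<and>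
    ((0 < c \<longrightarrow> d * c = G) \<longrightarrow> p * d powr (p-1) * c powr p = c * (p * G powr (p-1)))"
  proof cases
    case 1 then show ?thesis by simp
  next
    case 2 then show ?thesis using d0 by simp
  next
    case 3
    define m where "m = d * c"
    have m0: "0 < m" unfolding m_def using 3 by simp
    have mG: "m \<le> G" unfolding m_def using dcG .
    have e1: "(d * c) powr (p-1) = d powr (p-1) * c powr (p-1)" using 3 by (simp add: powr_mult)
    have e2: "c powr ((p-1) + 1) = c powr (p-1) * c powr 1" by (rule powr_add)
    have e3: "c powr p = c powr (p-1) * c" using e2 3 by simp
    have L: "p * d powr (p-1) * c powr p = c * (p * m powr (p-1))" unfolding m_def e1 e3 by (simp add: ac_simps)
    have A: "1 \<le> p \<Longrightarrow> m powr (p-1) \<le> G powr (p-1)" using m0 mG by (intro powr_mono2) auto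
    have B: "p \<le> 1 \<Longrightarrow> G powr (p-1) \<le> m powr (p-1)" using m0 mG by (intro powr_mono2') auto
    have cp: "0 \<le> c * p" using 3 p by simp
    show ?thesis unfolding L
      using mult_left_mono[OF A cp] mult_left_mono[OF B cp] 3 by (auto simp: m_def ac_simps)
  qed
  then show "1 \<le> p \<Longrightarrow> p * d powr (p-1) * c powr p \<le> c * (p * G powr (p-1))"
    and "p \<le> 1 \<Longrightarrow> c * (p * G powr (p-1)) \<le> p * d powr (p-1) * c powr p"
    and "(0 < c \<Longrightarrow> d * c = G) \<Longrightarrow> p * d powr (p-1) * c powr p = c * (p * G powr (p-1))" by auto
qed

lemma Psi_cmp:
  fixes g :: "real \<Rightarrow> real"
  assumes gm: "mono g" and g0: "\<And>y. y \<le> 0 \<Longrightarrow> g y = 0" and p: "0 < p" and x: "0 < x"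
  shows "1 \<le> p \<Longrightarrow> Psi p g x \<le> ennreal ((LBINT t:{0<..x}. g t) powr p)"
    and "p \<le> 1 \<Longrightarrow> ennreal ((LBINT t:{0<..x}. g t) powr p) \<le> Psi p g x"
    and "(\<And>y. 0 < y \<Longrightarrow> y \<le> x \<Longrightarrow> 0 < g y \<Longrightarrow> (x - y) * g y = (LBINT t:{0<..x}. g t) - (LBINT t:{0<..y}. g t)) \<Longrightarrow> Psi p g x = ennreal ((LBINT t:{0<..x}. g t) powr p)"
proof -
  define F where "F = (\<lambda>y. LBINT t:{0<..y}. g t)"
  define T where "T = F x"
  have gmb[measurable]: "g \<in> borel_measurable borel" using gm by (rule borel_measurable_mono)
  have Fm[measurable]: "F \<in> borel_measurable borel" unfolding F_def using mg_F_mono[OF gm g0] by (rule borel_measurable_mono)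
  have T0: "0 \<le> T" unfolding T_def F_def using mg_int_nonneg[OF gm g0, of 0 x] by simp
  have Q: "(\<integral>\<^sup>+y. ennreal (if 0 < y \<and> y \<le> x then g y * (p * (T - F y) powr (p-1)) else 0) \<partial>lborel) = ennreal (T powr p)"
  proof -
    have "(\<integral>\<^sup>+y. ennreal (if 0 < y \<and> y \<le> x then g y * (p * (T - F y) powr (p-1)) else 0) \<partial>lborel)
        = (\<integral>\<^sup>+y. ennreal (indicator {0<..x} y * g y) * (\<lambda>t. ennreal (p * (T - t) powr (p-1))) (F y) \<partial>lborel)"
      using mg_nonneg[OF gm g0] p by (intro nn_integral_cong) (auto simp: ennreal_mult[symmetric])
    also have "\<dots> = (\<integral>\<^sup>+t. indicator {0..T} t * ennreal (p * (T - t) powr (p-1)) \<partial>lborel)"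
      unfolding F_def T_def by (rule pushforward[OF gm g0 x]) measurable
    also have "\<dots> = ennreal (T powr p)" by (rule power_integral[OF p T0])
    finally show ?thesis .
  qed
  have key: "(x - y) * g y \<le> T - F y" "x - y = 0 \<Longrightarrow> T - F y = 0" if "0 < y" "y \<le> x" for y
  proof -
    have "T = F y + (LBINT t:{y<..x}. g t)" unfolding T_def F_def using mg_split[OF gm g0, of 0 y x] that by simp
    moreover have "(x - y) * g y \<le> (LBINT t:{y<..x}. g t)" using mg_bounds(1)[OF gm g0 that(2)] .
    ultimately show "(x - y) * g y \<le> T - F y" by simp
    show "x - y = 0 \<Longrightarrow> T - F y = 0" unfolding T_def by simp
  qed
  have PsiT: "Psi p g x = (\<integral>\<^sup>+y. ennreal (if 0 < y \<and> y \<le> x then p * (x-y) powr (p-1) * g y powr p else 0) \<partial>lborel)"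
    unfolding Psi_def ..
  show "1 \<le> p \<Longrightarrow> Psi p g x \<le> ennreal ((LBINT t:{0<..x}. g t) powr p)"
  proof -
    assume p1: "1 \<le> p"
    have "Psi p g x \<le> (\<integral>\<^sup>+y. ennreal (if 0 < y \<and> y \<le> x then g y * (p * (T - F y) powr (p-1)) else 0) \<partial>lborel)"
      unfolding PsiT
      by (intro nn_integral_mono ennreal_leI) (auto intro!: alg_cmp(1)[OF p _ mg_nonneg[OF gm g0] key(1) key(2) p1])
    then show ?thesis using Q unfolding T_def F_def by simp
  qed
  show "p \<le> 1 \<Longrightarrow> ennreal ((LBINT t:{0<..x}. g t) powr p) \<le> Psi p g x"
  proof -
    assume p1: "p \<le> 1"
    have "(\<integral>\<^sup>+y. ennreal (if 0 < y \<and> y \<le> x then g y * (p * (T - F y) powr (p-1)) else 0) \<partial>lborel) \<le> Psi p g x"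
      unfolding PsiT
      by (intro nn_integral_mono ennreal_leI) (auto intro!: alg_cmp(2)[OF p _ mg_nonneg[OF gm g0] key(1) key(2) p1])
    then show ?thesis using Q unfolding T_def F_def by simp
  qed
  show "(\<And>y. 0 < y \<Longrightarrow> y \<le> x \<Longrightarrow> 0 < g y \<Longrightarrow> (x - y) * g y = (LBINT t:{0<..x}. g t) - (LBINT t:{0<..y}. g t)) \<Longrightarrow> Psi p g x = ennreal ((LBINT t:{0<..x}. g t) powr p)"
  proof -
    assume eq: "\<And>y. 0 < y \<Longrightarrow> y \<le> x \<Longrightarrow> 0 < g y \<Longrightarrow> (x - y) * g y = (LBINT t:{0<..x}. g t) - (LBINT t:{0<..y}. g t)"
    have "Psi p g x = (\<integral>\<^sup>+y. ennreal (if 0 < y \<and> y \<le> x then g y * (p * (T - F y) powr (p-1)) else 0) \<partial>lborel)"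
      unfolding PsiT
    proof (intro nn_integral_cong)
      fix y
      show "ennreal (if 0 < y \<and> y \<le> x then p * (x-y) powr (p-1) * g y powr p else 0) = ennreal (if 0 < y \<and> y \<le> x then g y * (p * (T - F y) powr (p-1)) else 0)"
      proof (cases "0 < y \<and> y \<le> x")
        case True
        have e: "0 < g y \<Longrightarrow> (x - y) * g y = T - F y" using True eq unfolding T_def F_def by simp
        have y0: "0 < y" and yx: "y \<le> x" and dx: "0 \<le> x - y" using True by auto
        have eq2: "p * (x-y) powr (p-1) * g y powr p = g y * (p * (T - F y) powr (p-1))"
          using alg_cmp(3)[OF p dx mg_nonneg[OF gm g0, of y] key(1)[OF y0 yx] key(2)[OF y0 yx] e] .
        show ?thesis by (simp only: if_P[OF True] eq2)
      next
        case False
        show ?thesis by (simp only: if_not_P[OF False])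
      qed
    qed
    then show ?thesis using Q unfolding T_def F_def by simp
  qed
qed

lemma lhs_form:
  fixes g :: "real \<Rightarrow> real"
  shows "hardy_lhs p \<alpha> g = (\<integral>\<^sup>+x\<in>{0<..}. ennreal ((LBINT t:{0<..x}. g t) powr p) * ennreal (x powr (-\<alpha>) / x) \<partial>lborel)"
  unfolding hardy_lhs_def
  by (intro nn_integral_cong) (auto simp: ennreal_mult[symmetric] indicator_def)

lemma main_ineq:
  fixes g :: "real \<Rightarrow> real" and p \<alpha> :: real
  assumes gm: "mono g" and g0: "\<And>y. y \<le> 0 \<Longrightarrow> g y = 0" and p: "0 < p" and pa: "p \<le> \<alpha>"
  shows "1 \<le> p \<Longrightarrow> ennreal (p * Beta p (\<alpha> - p + 1)) * hardy_rhs p \<alpha> g \<le> hardy_lhs p \<alpha> g"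
    and "p \<le> 1 \<Longrightarrow> hardy_lhs p \<alpha> g \<le> ennreal (p * Beta p (\<alpha> - p + 1)) * hardy_rhs p \<alpha> g"
    and "(\<And>x y. 0 < x \<Longrightarrow> 0 < y \<Longrightarrow> y \<le> x \<Longrightarrow> 0 < g y \<Longrightarrow> (x - y) * g y = (LBINT t:{0<..x}. g t) - (LBINT t:{0<..y}. g t))
          \<Longrightarrow> hardy_lhs p \<alpha> g = ennreal (p * Beta p (\<alpha> - p + 1)) * hardy_rhs p \<alpha> g"
proof -
  have gmb: "g \<in> borel_measurable borel" using gm by (rule borel_measurable_mono)
  note T = tonelli_step[OF p pa gmb mg_nonneg[OF gm g0], symmetric]
  note L = lhs_form[of p \<alpha> g]
  show "1 \<le> p \<Longrightarrow> ennreal (p * Beta p (\<alpha> - p + 1)) * hardy_rhs p \<alpha> g \<le> hardy_lhs p \<alpha> g"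
  proof -
    assume p1: "1 \<le> p"
    have "(\<integral>\<^sup>+x\<in>{0<..}. Psi p g x * ennreal (x powr (-\<alpha>) / x) \<partial>lborel) \<le> (\<integral>\<^sup>+x\<in>{0<..}. ennreal ((LBINT t:{0<..x}. g t) powr p) * ennreal (x powr (-\<alpha>) / x) \<partial>lborel)"
      by (intro nn_integral_mono) (auto simp: indicator_def intro!: mult_right_mono Psi_cmp(1)[OF gm g0 p _ p1])
    then show ?thesis using T L by simp
  qed
  show "p \<le> 1 \<Longrightarrow> hardy_lhs p \<alpha> g \<le> ennreal (p * Beta p (\<alpha> - p + 1)) * hardy_rhs p \<alpha> g"
  proof -
    assume p1: "p \<le> 1"
    have "(\<integral>\<^sup>+x\<in>{0<..}. ennreal ((LBINT t:{0<..x}. g t) powr p) * ennreal (x powr (-\<alpha>) / x) \<partial>lborel) \<le> (\<integral>\<^sup>+x\<in>{0<..}. Psi p g x * ennreal (x powr (-\<alpha>) / x) \<partial>lborel)"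
      by (intro nn_integral_mono) (auto simp: indicator_def intro!: mult_right_mono Psi_cmp(2)[OF gm g0 p _ p1])
    then show ?thesis using T L by simp
  qed
  show "(\<And>x y. 0 < x \<Longrightarrow> 0 < y \<Longrightarrow> y \<le> x \<Longrightarrow> 0 < g y \<Longrightarrow> (x - y) * g y = (LBINT t:{0<..x}. g t) - (LBINT t:{0<..y}. g t))
          \<Longrightarrow> hardy_lhs p \<alpha> g = ennreal (p * Beta p (\<alpha> - p + 1)) * hardy_rhs p \<alpha> g"
  proof -
    assume eq: "\<And>x y. 0 < x \<Longrightarrow> 0 < y \<Longrightarrow> y \<le> x \<Longrightarrow> 0 < g y \<Longrightarrow> (x - y) * g y = (LBINT t:{0<..x}. g t) - (LBINT t:{0<..y}. g t)"
    have "(\<integral>\<^sup>+x\<in>{0<..}. ennreal ((LBINT t:{0<..x}. g t) powr p) * ennreal (x powr (-\<alpha>) / x) \<partial>lborel) = (\<integral>\<^sup>+x\<in>{0<..}. Psi p g x * ennreal (x powr (-\<alpha>) / x) \<partial>lborel)"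
    proof (intro nn_integral_cong)
      fix x :: real
      show "ennreal ((LBINT t:{0<..x}. g t) powr p) * ennreal (x powr (-\<alpha>) / x) * indicator {0<..} x = Psi p g x * ennreal (x powr (-\<alpha>) / x) * indicator {0<..} x"
      proof (cases "0 < x")
        case True
        have eqx: "(x - y) * g y = (LBINT t:{0<..x}. g t) - (LBINT t:{0<..y}. g t)" if "0 < y" "y \<le> x" "0 < g y" for y
          using eq[OF True that] .
        have "Psi p g x = ennreal ((LBINT t:{0<..x}. g t) powr p)"
          using Psi_cmp(3)[OF gm g0 p True eqx] .
        then show ?thesis by simp
      qed simp
    qed
    then show ?thesis using T L by simp
  qed
qed

lemma step_fun:
  fixes A c :: real assumes A: "0 < A" and c: "0 < c"
  shows "mono (\<lambda>x. A * indicator {c<..} x)" and "\<And>y. y \<le> 0 \<Longrightarrow> A * indicator {c<..} y = (0::real)"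
    and "\<And>x y. 0 < x \<Longrightarrow> 0 < y \<Longrightarrow> y \<le> x \<Longrightarrow> 0 < A * indicator {c<..} y \<Longrightarrow>
       (x - y) * (A * indicator {c<..} y) = (LBINT t:{0<..x}. A * indicator {c<..} t) - (LBINT t:{0<..y}. A * indicator {c<..} t)"
proof -
  show m: "mono (\<lambda>x. A * indicator {c<..} x)"
    using A by (intro monoI) (auto simp: indicator_def)
  show z: "\<And>y. y \<le> 0 \<Longrightarrow> A * indicator {c<..} y = (0::real)" using c by (auto simp: indicator_def)
  fix x y :: real assume x: "0 < x" and y: "0 < y" and yx: "y \<le> x" and gy: "0 < A * indicator {c<..} y"
  have yc: "c < y" using gy by (cases "c < y") auto
  have s1: "(LBINT t:{0<..x}. A * indicator {c<..} t) = (LBINT t:{0<..y}. A * indicator {c<..} t) + (LBINT t:{y<..x}. A * indicator {c<..} t)"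
    using mg_split[OF m z, of 0 y x] y yx by simp
  have s2: "(LBINT t:{y<..x}. A * indicator {c<..} t) = (LBINT t:{y<..x}. A)"
    using yc by (intro set_lebesgue_integral_cong) auto
  have s3: "(LBINT t:{y<..x}. A) = (x - y) * A"
    using set_integral_const[of "{y<..x}" lborel A] yx Ioc_fin[of y x] by (simp add: measure_lborel_Ioc)
  have ind: "A * indicator {c<..} y = A" using yc by simp
  show "(x - y) * (A * indicator {c<..} y) = (LBINT t:{0<..x}. A * indicator {c<..} t) - (LBINT t:{0<..y}. A * indicator {c<..} t)"
    unfolding ind using s1 s2 s3 by linarith
qed

theorem mainTheorem7:
  fixes p \<alpha> :: real
  assumes "0 < p" and "p \<le> \<alpha>"
  shows "(\<forall>f :: real \<Rightarrow> real.
            set_borel_measurable lborel {0<..} f \<and> (\<forall>x>0. 0 \<le> f x) \<and> mono_on {0<..} f \<longrightarrow>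
              (1 \<le> p \<longrightarrow> hardy_lhs p \<alpha> f \<ge> ennreal (p * Beta p (\<alpha> - p + 1)) * hardy_rhs p \<alpha> f) \<and>
              (p \<le> 1 \<longrightarrow> hardy_lhs p \<alpha> f \<le> ennreal (p * Beta p (\<alpha> - p + 1)) * hardy_rhs p \<alpha> f))
       \<and> (\<forall>A c :: real. 0 < A \<and> 0 < c \<longrightarrow>
            hardy_lhs p \<alpha> (\<lambda>x. A * indicator {c<..} x)
              = ennreal (p * Beta p (\<alpha> - p + 1)) * hardy_rhs p \<alpha> (\<lambda>x. A * indicator {c<..} x))"
proof (intro conjI allI impI)
  fix A c :: real assume Ac: "0 < A \<and> 0 < c"
  show "hardy_lhs p \<alpha> (\<lambda>x. A * indicator {c<..} x) = ennreal (p * Beta p (\<alpha> - p + 1)) * hardy_rhs p \<alpha> (\<lambda>x. A * indicator {c<..} x)"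
    using Ac by (intro main_ineq(3)[OF step_fun(1,2) assms] step_fun(3)) auto
next
  fix f :: "real \<Rightarrow> real"
  assume hf: "set_borel_measurable lborel {0<..} f \<and> (\<forall>x>0. 0 \<le> f x) \<and> mono_on {0<..} f"
  define g where "g = (\<lambda>y. if 0 < y then f y else 0)"
  have gm: "mono g"
  proof (rule monoI)
    fix a b :: real assume "a \<le> b"
    then show "g a \<le> g b" using hf unfolding g_def by (auto intro: mono_onD)
  qed
  have g0: "\<And>y. y \<le> 0 \<Longrightarrow> g y = 0" unfolding g_def by auto
  have el: "hardy_lhs p \<alpha> f = hardy_lhs p \<alpha> g"
    unfolding hardy_lhs_def
  proof (intro nn_integral_cong)
    fix x :: real
    show "ennreal ((LBINT y:{0<..x}. f y) powr p * x powr - \<alpha> / x) * indicator {0<..} x = ennreal ((LBINT y:{0<..x}. g y) powr p * x powr - \<alpha> / x) * indicator {0<..} x"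
    proof -
      have "(LBINT y:{0<..x}. f y) = (LBINT y:{0<..x}. g y)"
        by (intro set_lebesgue_integral_cong) (auto simp: g_def)
      then show ?thesis by simp
    qed
  qed
  have er: "hardy_rhs p \<alpha> f = hardy_rhs p \<alpha> g"
    unfolding hardy_rhs_def by (intro nn_integral_cong) (auto simp: g_def indicator_def)
  show "1 \<le> p \<Longrightarrow> hardy_lhs p \<alpha> f \<ge> ennreal (p * Beta p (\<alpha> - p + 1)) * hardy_rhs p \<alpha> f"
    unfolding el er by (rule main_ineq(1)[OF gm g0 assms])
  show "p \<le> 1 \<Longrightarrow> hardy_lhs p \<alpha> f \<le> ennreal (p * Beta p (\<alpha> - p + 1)) * hardy_rhs p \<alpha> f"
    unfolding el er by (rule main_ineq(2)[OF gm g0 assms])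
qed

end
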